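(* Let $G=(V,w)$ be a weighted graph, let $Z\in\mathcal{M}(G)$ be a crossless non-star minimum cut with shores $X_0$, $X_1=V\setminus X_0$, and let $\{G_0,G_1\}=\mathrm{sep}(G,Z)$. Then $\mathrm{cdim}(G)\le\mathrm{cdim}(G_0)+\mathrm{cdim}(G_1)-1$, and if $Z$ is connected then equality holds.
   Context: A weighted graph $G=(V,w)$ has nonnegative weights on unordered pairs of distinct vertices; its edge set is $E=\{e:w(e)>0\}$. For $\emptyset\ne X\subsetneq V$, $\Delta(X)$ is the set of edges with exactly one endpoint in $X$ (a cut with shores $X$, $V\setminus X$). A cut is a star cut if one shore is a single vertex, otherwise non-star. $\mathcal{M}(G)$ is the set of minimum-weight cuts; $\chi(S)$ is the characteristic vector of $S$ indexed by the edges; $\mathrm{cdim}(G)=\dim\,\mathrm{span}\{\chi(S):S\in\mathcal{M}(G)\}$. Sets $X,Y$ cross if $X\cap Y$, $X\setminus Y$, $Y\setminus X$, $V\setminus(X\cup Y)$ are all nonempty; cuts cross if their shores cross; a mincut is crossless if no other mincut crosses it. A cut $S$ is connected if the unweighted graph whose vertices are the endpoints of edges of $S$ and whose edge set is $S$ is connected. The separation $\mathrm{sep}(G,Z)$ is the pair $G_b=(X_b\cup\{v_{1-b}\},w_b)$, $b\in\{0,1\}$, with new vertices $v_0,v_1$, $w_b(\{x,y\})=w(\{x,y\})$ for $x,y\in X_b$ and $w_b(\{x,v_{1-b}\})=\sum_{y\in X_{1-b}}w(\{x,y\})$ for $x\in X_b$. *)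

theory Defs
  imports "HOL-Analysis.Analysis" "HOL-Library.Function_Algebras"
begin

definition weighted_graph :: "'v set \<Rightarrow> ('v set \<Rightarrow> real) \<Rightarrow> bool" where
  "weighted_graph V w \<longleftrightarrow> finite V \<and> (\<forall>x\<in>V. \<forall>y\<in>V. x \<noteq> y \<longrightarrow> w {x, y} \<ge> 0)"

definition edges :: "'v set \<Rightarrow> ('v set \<Rightarrow> real) \<Rightarrow> 'v set set" where
  "edges V w = {e. \<exists>x\<in>V. \<exists>y\<in>V. x \<noteq> y \<and> e = {x, y} \<and> w e > 0}"

definition cut :: "'v set \<Rightarrow> ('v set \<Rightarrow> real) \<Rightarrow> 'v set \<Rightarrow> 'v set set" where
  "cut V w X = {e \<in> edges V w. card (e \<inter> X) = 1}"

definition is_shore :: "'v set \<Rightarrow> 'v set \<Rightarrow> bool" where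
  "is_shore V X \<longleftrightarrow> X \<noteq> {} \<and> X \<subset> V"

definition cut_weight :: "('v set \<Rightarrow> real) \<Rightarrow> 'v set set \<Rightarrow> real" where
  "cut_weight w S = (\<Sum>e\<in>S. w e)"

definition mincuts :: "'v set \<Rightarrow> ('v set \<Rightarrow> real) \<Rightarrow> 'v set set set" where
  "mincuts V w = {cut V w X | X. is_shore V X \<and>
      (\<forall>Y. is_shore V Y \<longrightarrow> cut_weight w (cut V w X) \<le> cut_weight w (cut V w Y))}"

definition chi :: "'v set set \<Rightarrow> 'v set \<Rightarrow> real" where
  "chi S = indicator S"

definition cdim :: "'v set \<Rightarrow> ('v set \<Rightarrow> real) \<Rightarrow> nat" where
  "cdim V w = vector_space.dim (\<lambda>(c::real) (f::'v set \<Rightarrow> real). (\<lambda>e. c * f e)) (chi ` mincuts V w)"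

definition crosses :: "'v set \<Rightarrow> 'v set \<Rightarrow> 'v set \<Rightarrow> bool" where
  "crosses V X Y \<longleftrightarrow> X \<inter> Y \<noteq> {} \<and> X - Y \<noteq> {} \<and> Y - X \<noteq> {} \<and> V - (X \<union> Y) \<noteq> {}"

definition crossless :: "'v set \<Rightarrow> ('v set \<Rightarrow> real) \<Rightarrow> 'v set \<Rightarrow> bool" where
  "crossless V w X \<longleftrightarrow> (\<forall>Y. is_shore V Y \<and> cut V w Y \<in> mincuts V w \<longrightarrow> \<not> crosses V X Y)"

definition star_cut :: "'v set \<Rightarrow> ('v set \<Rightarrow> real) \<Rightarrow> 'v set set \<Rightarrow> bool" where
  "star_cut V w S \<longleftrightarrow> (\<exists>X. is_shore V X \<and> S = cut V w X \<and> (card X = 1 \<or> card (V - X) = 1))"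

definition edge_rel :: "'v set set \<Rightarrow> ('v \<times> 'v) set" where
  "edge_rel S = {(x, y). {x, y} \<in> S}"

definition connected_edges :: "'v set set \<Rightarrow> bool" where
  "connected_edges S \<longleftrightarrow> (\<forall>x\<in>\<Union>S. \<forall>y\<in>\<Union>S. (x, y) \<in> (edge_rel S)\<^sup>*)"

definition connected_graph :: "'v set \<Rightarrow> ('v set \<Rightarrow> real) \<Rightarrow> bool" where
  "connected_graph V w \<longleftrightarrow> (\<forall>x\<in>V. \<forall>y\<in>V. (x, y) \<in> (edge_rel (edges V w))\<^sup>*)"

text \<open>Separation: G_b has vertex set X_b plus a new vertex (here None) standing for
  the contracted other shore Y = X_(1-b).\<close>
definition sep_V :: "'v set \<Rightarrow> 'v option set" where
  "sep_V X = Some ` X \<union> {None}"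

definition sep_w :: "('v set \<Rightarrow> real) \<Rightarrow> 'v set \<Rightarrow> 'v set \<Rightarrow> 'v option set \<Rightarrow> real" where
  "sep_w w X Y e =
     (if None \<notin> e then w (the ` e)
      else (\<Sum>x\<in>X. if e = {Some x, None} then (\<Sum>y\<in>Y. w {x, y}) else 0))"

end

theory Submission
  imports Defs
begin


context vector_space begin

lemma indep_union:
  assumes S: "independent S" and T: "independent T" and ST: "span S \<inter> span T \<subseteq> {0}"
  shows "independent (S \<union> T)"
  unfolding independent_explicit_finite_subsets
proof (intro allI impI ballI)
  fix U u v
  assume U: "U \<subseteq> S \<union> T" "finite U" and s0: "(\<Sum>v\<in>U. scale (u v) v) = 0" and v: "v \<in> U"
  define U1 where "U1 = U \<inter> S"
  define U2 where "U2 = U - S"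
  have U12: "U = U1 \<union> U2" "U1 \<inter> U2 = {}" "finite U1" "finite U2"
    using U by (auto simp: U1_def U2_def)
  have split: "(\<Sum>v\<in>U. scale (u v) v) = (\<Sum>v\<in>U1. scale (u v) v) + (\<Sum>v\<in>U2. scale (u v) v)"
    using U12 by (metis sum.union_disjoint)
  define x where "x = (\<Sum>v\<in>U1. scale (u v) v)"
  have xS: "x \<in> span S" unfolding x_def
    by (intro span_sum span_scale span_base) (auto simp: U1_def)
  have y: "(\<Sum>v\<in>U2. scale (u v) v) = - x" using s0 split x_def
    by (simp add: add_eq_0_iff)
  have "(\<Sum>v\<in>U2. scale (u v) v) \<in> span T"
    by (intro span_sum span_scale span_base) (use U in \<open>auto simp: U2_def\<close>)
  then have "- x \<in> span T" using y by simp
  then have "x \<in> span T" using span_neg by fastforce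
  then have x0: "x = 0" using xS ST by blast
  then have y0: "(\<Sum>v\<in>U2. scale (u v) v) = 0" using y by simp
  show "u v = 0"
  proof (cases "v \<in> U1")
    case True
    then show ?thesis using independentD[OF S U12(3) _ x0[unfolded x_def]] by (auto simp: U1_def)
  next
    case False
    then have "v \<in> U2" using v U12 by auto
    then show ?thesis using independentD[OF T U12(4) _ y0] U by (auto simp: U2_def)
  qed
qed

lemma basis_with:
  assumes "finite A" "z \<in> span A" "z \<noteq> 0"
  obtains B where "z \<in> B" "independent B" "span B = span A" "finite B" "card B = dim A"
proof -
  have "{z} \<subseteq> span A" "independent {z}" using assms by auto
  then obtain B where B: "{z} \<subseteq> B" "B \<subseteq> span A" "independent B" "span A \<subseteq> span B"
    using maximal_independent_subset_extend by blast
  have sp: "span B = span A"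
    using B span_mono[of B "span A"] span_span[of A] span_span[of B] span_mono[of "span A" "span B"]
    by blast
  have fin: "finite B" using independent_span_bound[OF assms(1) B(3,2)] by blast
  have "card B = dim A" using dim_span_eq_card_independent[OF B(3)] sp dim_span[of A] by simp
  then show ?thesis using that B sp fin by blast
qed

lemma dim_union_one:
  assumes fA: "finite A" and fB: "finite B" and zA: "z \<in> span A" and zB: "z \<in> span B"
    and z0: "z \<noteq> 0"
  shows "dim (A \<union> B) + 1 \<le> dim A + dim B"
    and "span A \<inter> span B \<subseteq> span {z} \<Longrightarrow> dim (A \<union> B) + 1 = dim A + dim B"
proof -
  obtain BA where BA: "z \<in> BA" "independent BA" "span BA = span A" "finite BA" "card BA = dim A"
    using basis_with[OF fA zA z0] by blast
  obtain BB where BB: "z \<in> BB" "independent BB" "span BB = span B" "finite BB" "card BB = dim B"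
    using basis_with[OF fB zB z0] by blast
  define D where "D = BB - {z}"
  have BBD: "BB = insert z D" "z \<notin> D" using BB(1) by (auto simp: D_def)
  have fD1: "finite D" using BB(4) by (simp add: D_def)
  have "card D = card BB - 1" unfolding D_def using BB(1,4) by (simp add: card_Diff_singleton)
  moreover have "card BB > 0" using BB(1,4) card_gt_0_iff by blast
  ultimately have fD: "finite D" "card D + 1 = dim B" using fD1 BB(5) by simp_all
  have sp1: "span (BA \<union> D) = span (A \<union> B)"
  proof -
    have "BA \<union> D \<subseteq> span (A \<union> B)"
    proof -
      have "BA \<subseteq> span A" using BA(3) span_superset[of BA] by simp
      moreover have "D \<subseteq> span B" using BB(3) span_superset[of BB] by (auto simp: D_def)
      moreover have "span A \<subseteq> span (A \<union> B)" "span B \<subseteq> span (A \<union> B)"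
        using span_mono[of A "A \<union> B"] span_mono[of B "A \<union> B"] by auto
      ultimately show ?thesis by blast
    qed
    moreover have "A \<union> B \<subseteq> span (BA \<union> D)"
    proof -
      have "A \<subseteq> span BA" using BA(3) span_superset[of A] by simp
      moreover have "B \<subseteq> span BB" using BB(3) span_superset[of B] by simp
      moreover have "BB \<subseteq> BA \<union> D" using BBD BA(1) by auto
      ultimately show ?thesis using span_mono[of BA "BA \<union> D"] span_mono[of BB "BA \<union> D"] by blast
    qed
    ultimately show ?thesis
      using span_mono span_span by (metis subset_antisym)
  qed
  have dimeq: "dim (A \<union> B) = dim (BA \<union> D)" using span_eq_dim[OF sp1] by simp
  have "dim (BA \<union> D) \<le> card (BA \<union> D)"
    using dim_le_card[OF span_superset] BA(4) fD(1) by blast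
  also have "\<dots> \<le> card BA + card D" by (rule card_Un_le)
  finally show "dim (A \<union> B) + 1 \<le> dim A + dim B" using dimeq BA(5) fD(2) by simp
  assume int: "span A \<inter> span B \<subseteq> span {z}"
  have Dind: "independent D" using BB(2) independent_mono by (auto simp: D_def)
  have zD: "z \<notin> span D" using BB(2) BBD independent_insert[of z D] by simp
  have sub: "span BA \<inter> span D \<subseteq> {0}"
  proof
    fix y assume y: "y \<in> span BA \<inter> span D"
    have "span D \<subseteq> span BB" using BBD span_mono by blast
    then have "y \<in> span {z}" using y BA(3) BB(3) int by blast
    then obtain c where c: "y = scale c z" by (auto simp: span_singleton)
    show "y \<in> {0}"
    proof (cases "c = 0")
      case True then show ?thesis using c by simp
    next
      case False
      have "scale (inverse c) y \<in> span D" using y span_scale by blast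
      then have "z \<in> span D" using c False by simp
      then show ?thesis using zD by blast
    qed
  qed
  have ind: "independent (BA \<union> D)" using indep_union[OF BA(2) Dind sub] .
  have disj: "BA \<inter> D = {}"
  proof (rule ccontr)
    assume "BA \<inter> D \<noteq> {}"
    then obtain v where v: "v \<in> BA" "v \<in> D" by blast
    then have "v = 0" using sub span_superset[of BA] span_superset[of D] by blast
    then show False using v BA(2) dependent_zero by blast
  qed
  have "dim (BA \<union> D) = card (BA \<union> D)" using dim_eq_card_independent[OF ind] .
  also have "\<dots> = card BA + card D" using card_Un_disjoint[OF BA(4) fD(1) disj] .
  finally show "dim (A \<union> B) + 1 = dim A + dim B" using dimeq BA(5) fD(2) by simp
qed

end

context Vector_Spaces.linear begin
lemma dim_image_inj_my:
  assumes "inj_on f (vs1.span S)"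
  shows "vs2.dim (f ` S) = vs1.dim S"
proof -
  obtain B where B: "B \<subseteq> S" "vs1.independent B" "S \<subseteq> vs1.span B" "card B = vs1.dim S"
    using vs1.basis_exists[of S] by blast
  have spB: "vs1.span B = vs1.span S"
    using B vs1.span_mono[of B S] vs1.span_mono[of S "vs1.span B"] vs1.span_span[of B] by blast
  have inj: "inj_on f (vs1.span B)" using assms spB by simp
  have ind: "vs2.independent (f ` B)" using independent_injective_image[OF B(2) inj] .
  have "vs2.span (f ` B) = vs2.span (f ` S)" using span_image spB by metis
  then have "vs2.dim (f ` S) = vs2.dim (f ` B)" using vs2.span_eq_dim by metis
  also have "\<dots> = card (f ` B)" using vs2.dim_eq_card_independent[OF ind] .
  also have "\<dots> = card B"
    using card_image[OF inj_on_subset[OF inj vs1.span_superset]] .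
  finally show ?thesis using B(4) by simp
qed
end



lemma vs_fun: "vector_space (\<lambda>(c::real) (f::'a \<Rightarrow> real) e. c * f e)"
  by unfold_locales (auto simp: algebra_simps fun_eq_iff)

lemma mod_fun: "module (\<lambda>(c::real) (f::'a \<Rightarrow> real) e. c * f e)"
  using vs_fun module_iff_vector_space by blast

lemma edges_iff: "e \<in> edges V w \<longleftrightarrow> (\<exists>x y. x \<in> V \<and> y \<in> V \<and> x \<noteq> y \<and> e = {x, y} \<and> w {x, y} > 0)"
  unfolding edges_def by auto

lemma card_pair_int: "x \<noteq> y \<Longrightarrow> card ({x, y} \<inter> Y) = 1 \<longleftrightarrow> (x \<in> Y \<longleftrightarrow> y \<notin> Y)"
  by (cases "x \<in> Y"; cases "y \<in> Y") auto

lemma cut_iff: "e \<in> cut V w Y \<longleftrightarrow>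
   (\<exists>x y. x \<in> V \<and> y \<in> V \<and> x \<noteq> y \<and> e = {x, y} \<and> w {x, y} > 0 \<and> (x \<in> Y \<longleftrightarrow> y \<notin> Y))"
proof
  assume "e \<in> cut V w Y"
  then obtain x y where "x \<in> V \<and> y \<in> V \<and> x \<noteq> y \<and> e = {x, y} \<and> w {x, y} > 0" "card (e \<inter> Y) = 1"
    unfolding cut_def edges_iff by blast
  then show "\<exists>x y. x \<in> V \<and> y \<in> V \<and> x \<noteq> y \<and> e = {x, y} \<and> w {x, y} > 0 \<and> (x \<in> Y \<longleftrightarrow> y \<notin> Y)"
    using card_pair_int[of x y Y] by auto
next
  assume "\<exists>x y. x \<in> V \<and> y \<in> V \<and> x \<noteq> y \<and> e = {x, y} \<and> w {x, y} > 0 \<and> (x \<in> Y \<longleftrightarrow> y \<notin> Y)"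
  then obtain x y where "x \<in> V \<and> y \<in> V \<and> x \<noteq> y \<and> e = {x, y} \<and> w {x, y} > 0" "(x \<in> Y \<longleftrightarrow> y \<notin> Y)"
    by blast
  then show "e \<in> cut V w Y" unfolding cut_def edges_iff using card_pair_int[of x y Y] by auto
qed

lemma cut_compl: "cut V w (V - A) = cut V w A"
proof (rule set_eqI)
  fix e
  show "e \<in> cut V w (V - A) \<longleftrightarrow> e \<in> cut V w A"
  proof
    assume "e \<in> cut V w (V - A)"
    then obtain x y where h: "x \<in> V" "y \<in> V" "x \<noteq> y" "e = {x, y}" "w {x, y} > 0" "x \<in> V - A \<longleftrightarrow> y \<notin> V - A"
      unfolding cut_iff by blast
    then have "x \<in> A \<longleftrightarrow> y \<notin> A" by auto
    then show "e \<in> cut V w A" unfolding cut_iff using h by blast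
  next
    assume "e \<in> cut V w A"
    then obtain x y where h: "x \<in> V" "y \<in> V" "x \<noteq> y" "e = {x, y}" "w {x, y} > 0" "x \<in> A \<longleftrightarrow> y \<notin> A"
      unfolding cut_iff by blast
    then have "x \<in> V - A \<longleftrightarrow> y \<notin> V - A" by auto
    then show "e \<in> cut V w (V - A)" unfolding cut_iff using h by blast
  qed
qed

lemma cut_sub_edges: "cut V w A \<subseteq> edges V w"
  unfolding cut_def by blast

lemma cut_weight_sum:
  assumes wg: "weighted_graph V w" and YV: "Y \<subseteq> V"
  shows "cut_weight w (cut V w Y) = (\<Sum>a\<in>Y. \<Sum>b\<in>V - Y. w {a, b})"
proof -
  have fV: "finite V" and nn: "\<And>x y. x \<in> V \<Longrightarrow> y \<in> V \<Longrightarrow> x \<noteq> y \<Longrightarrow> w {x, y} \<ge> 0"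
    using wg unfolding weighted_graph_def by auto
  define P where "P = {p \<in> Y \<times> (V - Y). w {fst p, snd p} > 0}"
  have img: "cut V w Y = (\<lambda>p. {fst p, snd p}) ` P"
  proof
    show "cut V w Y \<subseteq> (\<lambda>p. {fst p, snd p}) ` P"
    proof
      fix e assume "e \<in> cut V w Y"
      then obtain x y where xy: "x \<in> V" "y \<in> V" "x \<noteq> y" "e = {x, y}" "w {x, y} > 0" "x \<in> Y \<longleftrightarrow> y \<notin> Y"
        unfolding cut_iff by blast
      show "e \<in> (\<lambda>p. {fst p, snd p}) ` P"
      proof (cases "x \<in> Y")
        case True
        then have "(x, y) \<in> P" using xy by (auto simp: P_def)
        then show ?thesis using xy by force
      next
        case False
        then have "(y, x) \<in> P" using xy by (auto simp: P_def insert_commute)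
        then show ?thesis using xy by (force simp: insert_commute)
      qed
    qed
  next
    show "(\<lambda>p. {fst p, snd p}) ` P \<subseteq> cut V w Y"
    proof
      fix e assume "e \<in> (\<lambda>p. {fst p, snd p}) ` P"
      then obtain a b where ab: "a \<in> Y" "b \<in> V" "b \<notin> Y" "w {a, b} > 0" "e = {a, b}"
        by (auto simp: P_def)
      then show "e \<in> cut V w Y" unfolding cut_iff using YV by blast
    qed
  qed
  have inj: "inj_on (\<lambda>p. {fst p, snd p}) P"
  proof
    fix p q assume pq: "p \<in> P" "q \<in> P" "{fst p, snd p} = {fst q, snd q}"
    then have "fst p \<in> Y" "snd p \<notin> Y" "fst q \<in> Y" "snd q \<notin> Y" by (auto simp: P_def)
    then show "p = q" using pq(3) by (metis doubleton_eq_iff prod.collapse)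
  qed
  have fP: "finite (Y \<times> (V - Y))" using fV YV finite_subset by blast
  have "cut_weight w (cut V w Y) = (\<Sum>p\<in>P. w {fst p, snd p})"
    unfolding cut_weight_def img by (simp add: sum.reindex[OF inj])
  also have "\<dots> = (\<Sum>p\<in>Y \<times> (V - Y). w {fst p, snd p})"
  proof (rule sum.mono_neutral_left[OF fP])
    show "P \<subseteq> Y \<times> (V - Y)" by (auto simp: P_def)
    show "\<forall>i\<in>Y \<times> (V - Y) - P. w {fst i, snd i} = 0"
    proof
      fix i assume i: "i \<in> Y \<times> (V - Y) - P"
      then have "w {fst i, snd i} \<ge> 0" using nn YV by (metis DiffD1 DiffD2 SigmaE fst_conv snd_conv subsetD)
      then show "w {fst i, snd i} = 0" using i by (auto simp: P_def)
    qed
  qed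
  also have "\<dots> = (\<Sum>a\<in>Y. \<Sum>b\<in>V - Y. w {a, b})"
    by (simp add: sum.cartesian_product split_def)
  finally show ?thesis .
qed


lemma cut_pair:
  assumes "x \<in> V" "y \<in> V" "x \<noteq> y"
  shows "{x, y} \<in> cut V w Y \<longleftrightarrow> w {x, y} > 0 \<and> (x \<in> Y \<longleftrightarrow> y \<notin> Y)"
proof -
  have "{x, y} \<in> edges V w \<longleftrightarrow> w {x, y} > 0" using assms unfolding edges_def by blast
  then show ?thesis unfolding cut_def using card_pair_int[OF assms(3)] by auto
qed

lemma edge_in: "x \<in> V \<Longrightarrow> y \<in> V \<Longrightarrow> x \<noteq> y \<Longrightarrow> w {x, y} > 0 \<Longrightarrow> {x, y} \<in> edges V w"
  unfolding edges_def by auto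

definition lift :: "'v set \<Rightarrow> ('v set \<Rightarrow> real) \<Rightarrow> 'v set \<Rightarrow> ('v option set \<Rightarrow> real) \<Rightarrow> 'v set \<Rightarrow> real" where
  "lift V w X f e = (if e \<in> edges V w then
      (if e \<subseteq> X then f (Some ` e)
       else if card (e \<inter> X) = 1 then f (insert None (Some ` (e \<inter> X))) else 0) else 0)"

lemma sep_w_SS: "sep_w w X Y {Some a, Some b} = w {a, b}"
  unfolding sep_w_def by simp

lemma sep_w_SN:
  assumes "a \<in> X" "finite X"
  shows "sep_w w X Y {Some a, None} = (\<Sum>b\<in>Y. w {a, b})"
proof -
  have "(\<Sum>x\<in>X. if {Some a, None} = {Some x, None} then (\<Sum>y\<in>Y. w {x, y}) else 0)
      = (\<Sum>x\<in>X. if a = x then (\<Sum>y\<in>Y. w {x, y}) else 0)"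
    by (rule sum.cong) (auto simp: doubleton_eq_iff)
  also have "\<dots> = (\<Sum>b\<in>Y. w {a, b})" using assms by simp
  finally show ?thesis unfolding sep_w_def by simp
qed

locale sepl =
  fixes V :: "'v set" and w :: "'v set \<Rightarrow> real" and X :: "'v set"
  assumes wg: "weighted_graph V w" and sh: "is_shore V X" and mc: "cut V w X \<in> mincuts V w"
begin

abbreviation "V' \<equiv> sep_V X"
abbreviation "w' \<equiv> sep_w w X (V - X)"
definition "lam = cut_weight w (cut V w X)"

lemma fV: "finite V" using wg unfolding weighted_graph_def by blast
lemma XV: "X \<subseteq> V" "X \<noteq> {}" "V - X \<noteq> {}" using sh unfolding is_shore_def by auto
lemma fX: "finite X" using fV XV finite_subset by blast
lemma nn: "x \<in> V \<Longrightarrow> y \<in> V \<Longrightarrow> x \<noteq> y \<Longrightarrow> w {x, y} \<ge> 0"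
  using wg unfolding weighted_graph_def by blast

lemma lam_min: "is_shore V Y \<Longrightarrow> lam \<le> cut_weight w (cut V w Y)"
proof -
  assume Y: "is_shore V Y"
  obtain A where A: "cut V w X = cut V w A"
      "\<forall>Y. is_shore V Y \<longrightarrow> cut_weight w (cut V w A) \<le> cut_weight w (cut V w Y)"
    using mc unfolding mincuts_def by blast
  then show ?thesis using Y unfolding lam_def by simp
qed

lemma w'SN: "a \<in> X \<Longrightarrow> w' {Some a, None} = (\<Sum>b\<in>V - X. w {a, b})"
  using sep_w_SN[OF _ fX] by blast

lemma w'SN_ge: "a \<in> X \<Longrightarrow> b \<in> V - X \<Longrightarrow> w {a, b} \<le> w' {Some a, None}"
  unfolding w'SN
  by (rule member_le_sum) (use XV fV nn in \<open>auto\<close>)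

lemma w'SN_nn: "a \<in> X \<Longrightarrow> w' {Some a, None} \<ge> 0"
  unfolding w'SN
  by (rule sum_nonneg) (use XV nn in \<open>auto\<close>)

lemma wg': "weighted_graph V' w'"
  unfolding weighted_graph_def
proof (intro conjI ballI impI)
  show "finite V'" using fX by (simp add: sep_V_def)
  fix x y assume xy: "x \<in> V'" "y \<in> V'" "x \<noteq> y"
  show "w' {x, y} \<ge> 0"
  proof (cases x)
    case None
    then obtain b where "y = Some b" "b \<in> X" using xy by (auto simp: sep_V_def)
    then show ?thesis using None w'SN_nn[of b] by (simp add: insert_commute)
  next
    case (Some a)
    show ?thesis
    proof (cases y)
      case None
      then show ?thesis using Some xy w'SN_nn[of a] by (auto simp: sep_V_def)
    next
      case (Some b)
      then show ?thesis using \<open>x = Some a\<close> xy nn XV by (auto simp: sep_V_def sep_w_SS)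
    qed
  qed
qed

lemma weight_lift:
  assumes YX: "Y \<subseteq> X"
  shows "cut_weight w' (cut V' w' (Some ` Y)) = cut_weight w (cut V w Y)"
proof -
  have YV: "Y \<subseteq> V" using YX XV by blast
  have sub: "Some ` Y \<subseteq> V'" using YX by (auto simp: sep_V_def)
  have diff: "V' - Some ` Y = insert None (Some ` (X - Y))" by (auto simp: sep_V_def)
  have fXY: "finite (X - Y)" using fX by simp
  have "cut_weight w' (cut V' w' (Some ` Y)) = (\<Sum>a'\<in>Some ` Y. \<Sum>b'\<in>V' - Some ` Y. w' {a', b'})"
    using cut_weight_sum[OF wg' sub] .
  also have "\<dots> = (\<Sum>a\<in>Y. \<Sum>b'\<in>insert None (Some ` (X - Y)). w' {Some a, b'})"
    unfolding diff by (simp add: sum.reindex)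
  also have "\<dots> = (\<Sum>a\<in>Y. w' {Some a, None} + (\<Sum>b\<in>X - Y. w' {Some a, Some b}))"
    using fXY by (simp add: sum.reindex)
  also have "\<dots> = (\<Sum>a\<in>Y. (\<Sum>b\<in>V - X. w {a, b}) + (\<Sum>b\<in>X - Y. w {a, b}))"
    by (rule sum.cong) (use YX w'SN in \<open>auto simp: sep_w_SS\<close>)
  also have "\<dots> = (\<Sum>a\<in>Y. \<Sum>b\<in>V - Y. w {a, b})"
  proof (rule sum.cong[OF refl])
    fix a
    have "V - Y = (V - X) \<union> (X - Y)" using YX XV by blast
    moreover have "(V - X) \<inter> (X - Y) = {}" by blast
    ultimately show "(\<Sum>b\<in>V - X. w {a, b}) + (\<Sum>b\<in>X - Y. w {a, b}) = (\<Sum>b\<in>V - Y. w {a, b})"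
      using fV fXY by (simp add: sum.union_disjoint)
  qed
  also have "\<dots> = cut_weight w (cut V w Y)" using cut_weight_sum[OF wg YV] by simp
  finally show ?thesis .
qed

lemma some_form:
  assumes "C \<subseteq> V'" "None \<notin> C" "C \<noteq> {}"
  shows "\<exists>Y. Y \<noteq> {} \<and> Y \<subseteq> X \<and> C = Some ` Y"
proof -
  define Y where "Y = {x. Some x \<in> C}"
  have "C = Some ` Y"
  proof
    show "C \<subseteq> Some ` Y"
    proof
      fix c assume "c \<in> C"
      then obtain x where "c = Some x" using assms(2) by (cases c) auto
      then show "c \<in> Some ` Y" using \<open>c \<in> C\<close> by (auto simp: Y_def)
    qed
  qed (auto simp: Y_def)
  moreover have "Y \<subseteq> X" using assms(1) by (auto simp: Y_def sep_V_def)
  moreover have "Y \<noteq> {}" using assms(3) \<open>C = Some ` Y\<close> by auto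
  ultimately show ?thesis by blast
qed

lemma shore_reduce:
  assumes "is_shore V' B"
  shows "\<exists>Y. Y \<noteq> {} \<and> Y \<subseteq> X \<and> cut V' w' B = cut V' w' (Some ` Y)"
proof (cases "None \<in> B")
  case False
  have "B \<subseteq> V'" "B \<noteq> {}" using assms unfolding is_shore_def by auto
  then obtain Y where "Y \<noteq> {}" "Y \<subseteq> X" "B = Some ` Y" using some_form[of B] False by auto
  then show ?thesis by auto
next
  case True
  have "V' - B \<subseteq> V'" "None \<notin> V' - B" using True by auto
  moreover have "V' - B \<noteq> {}" using assms unfolding is_shore_def by auto
  ultimately obtain Y where Y: "Y \<noteq> {}" "Y \<subseteq> X" "V' - B = Some ` Y" using some_form[of "V' - B"] by auto
  have "cut V' w' B = cut V' w' (V' - B)" using cut_compl[symmetric] .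
  then have "cut V' w' B = cut V' w' (Some ` Y)" using Y(3) by simp
  then show ?thesis using Y(1,2) by auto
qed

lemma Y_shore: "Y \<noteq> {} \<Longrightarrow> Y \<subseteq> X \<Longrightarrow> is_shore V Y"
proof -
  assume "Y \<noteq> {}" "Y \<subseteq> X"
  moreover have "Y \<noteq> V" using XV \<open>Y \<subseteq> X\<close> by blast
  ultimately show "is_shore V Y" using XV unfolding is_shore_def by blast
qed

lemma SomeY_shore: "Y \<noteq> {} \<Longrightarrow> Y \<subseteq> X \<Longrightarrow> is_shore V' (Some ` Y)"
proof -
  assume "Y \<noteq> {}" "Y \<subseteq> X"
  moreover have "None \<in> V'" "None \<notin> Some ` Y" by (auto simp: sep_V_def)
  moreover have "Some ` Y \<subseteq> V'" using \<open>Y \<subseteq> X\<close> by (auto simp: sep_V_def)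
  ultimately show ?thesis unfolding is_shore_def by blast
qed

lemma lam_min': "is_shore V' B \<Longrightarrow> lam \<le> cut_weight w' (cut V' w' B)"
proof -
  assume "is_shore V' B"
  from shore_reduce[OF this] obtain Y where "Y \<noteq> {} \<and> Y \<subseteq> X \<and> cut V' w' B = cut V' w' (Some ` Y)" ..
  then have Y: "Y \<noteq> {}" "Y \<subseteq> X" "cut V' w' B = cut V' w' (Some ` Y)" by simp_all
  have "cut_weight w' (cut V' w' B) = cut_weight w (cut V w Y)" using Y(3) weight_lift[OF Y(2)] by simp
  then show ?thesis using lam_min[OF Y_shore[OF Y(1,2)]] by simp
qed

lemma lam_X': "cut_weight w' (cut V' w' (Some ` X)) = lam"
  using weight_lift[of X] by (simp add: lam_def)

lemma mincuts': "mincuts V' w' = {cut V' w' (Some ` Y) | Y. Y \<noteq> {} \<and> Y \<subseteq> X \<and> cut_weight w (cut V w Y) = lam}"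
proof
  show "mincuts V' w' \<subseteq> {cut V' w' (Some ` Y) | Y. Y \<noteq> {} \<and> Y \<subseteq> X \<and> cut_weight w (cut V w Y) = lam}"
  proof
    fix S assume "S \<in> mincuts V' w'"
    then obtain B where B: "S = cut V' w' B" "is_shore V' B"
      "\<And>B'. is_shore V' B' \<Longrightarrow> cut_weight w' (cut V' w' B) \<le> cut_weight w' (cut V' w' B')"
      unfolding mincuts_def by blast
    from shore_reduce[OF B(2)] obtain Y where "Y \<noteq> {} \<and> Y \<subseteq> X \<and> cut V' w' B = cut V' w' (Some ` Y)" ..
    then have Y: "Y \<noteq> {}" "Y \<subseteq> X" "cut V' w' B = cut V' w' (Some ` Y)" by simp_all
    have e1: "cut_weight w' (cut V' w' B) = cut_weight w (cut V w Y)"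
      using Y(3) weight_lift[OF Y(2)] by simp
    have "cut_weight w (cut V w Y) \<ge> lam" using lam_min[OF Y_shore[OF Y(1,2)]] .
    moreover have "cut_weight w' (cut V' w' B) \<le> lam"
      using B(3)[OF SomeY_shore[OF XV(2) order_refl]] lam_X' by simp
    ultimately have "cut_weight w (cut V w Y) = lam" using e1 by simp
    moreover have "S = cut V' w' (Some ` Y)" using B(1) Y(3) by simp
    ultimately show "S \<in> {cut V' w' (Some ` Y) | Y. Y \<noteq> {} \<and> Y \<subseteq> X \<and> cut_weight w (cut V w Y) = lam}"
      using Y(1,2) by blast
  qed
next
  show "{cut V' w' (Some ` Y) | Y. Y \<noteq> {} \<and> Y \<subseteq> X \<and> cut_weight w (cut V w Y) = lam} \<subseteq> mincuts V' w'"
  proof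
    fix S assume "S \<in> {cut V' w' (Some ` Y) | Y. Y \<noteq> {} \<and> Y \<subseteq> X \<and> cut_weight w (cut V w Y) = lam}"
    then obtain Y where Y: "S = cut V' w' (Some ` Y)" "Y \<noteq> {}" "Y \<subseteq> X" "cut_weight w (cut V w Y) = lam"
      by blast
    have "\<forall>B'. is_shore V' B' \<longrightarrow> cut_weight w' (cut V' w' (Some ` Y)) \<le> cut_weight w' (cut V' w' B')"
      using lam_min' weight_lift[OF Y(3)] Y(4) by simp
    then have "\<exists>A. S = cut V' w' A \<and> is_shore V' A \<and>
       (\<forall>B'. is_shore V' B' \<longrightarrow> cut_weight w' (cut V' w' A) \<le> cut_weight w' (cut V' w' B'))"
      using Y(1) SomeY_shore[OF Y(2,3)] by blast
    then show "S \<in> mincuts V' w'" unfolding mincuts_def by simp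
  qed
qed

lemma mincuts_lam: "mincuts V w = {cut V w Y | Y. is_shore V Y \<and> cut_weight w (cut V w Y) = lam}"
proof
  show "mincuts V w \<subseteq> {cut V w Y | Y. is_shore V Y \<and> cut_weight w (cut V w Y) = lam}"
  proof
    fix S assume "S \<in> mincuts V w"
    then obtain B where B: "S = cut V w B" "is_shore V B"
      "\<And>B'. is_shore V B' \<Longrightarrow> cut_weight w (cut V w B) \<le> cut_weight w (cut V w B')"
      unfolding mincuts_def by blast
    have "cut_weight w (cut V w B) = lam" using B(3)[OF sh] lam_min[OF B(2)] lam_def by simp
    then show "S \<in> {cut V w Y | Y. is_shore V Y \<and> cut_weight w (cut V w Y) = lam}" using B(1,2) by blast
  qed
next
  show "{cut V w Y | Y. is_shore V Y \<and> cut_weight w (cut V w Y) = lam} \<subseteq> mincuts V w"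
  proof
    fix S assume "S \<in> {cut V w Y | Y. is_shore V Y \<and> cut_weight w (cut V w Y) = lam}"
    then obtain Y where Y: "S = cut V w Y" "is_shore V Y" "cut_weight w (cut V w Y) = lam" by blast
    then have "\<exists>A. S = cut V w A \<and> is_shore V A \<and>
       (\<forall>B'. is_shore V B' \<longrightarrow> cut_weight w (cut V w A) \<le> cut_weight w (cut V w B'))"
      using lam_min by auto
    then show "S \<in> mincuts V w" unfolding mincuts_def by simp
  qed
qed

abbreviation "L \<equiv> lift V w X"

lemma edges'_cases:
  assumes "e \<in> edges V' w'"
  shows "(\<exists>a b. a \<in> X \<and> b \<in> X \<and> a \<noteq> b \<and> e = {Some a, Some b} \<and> w {a, b} > 0) \<or>
         (\<exists>a. a \<in> X \<and> e = {Some a, None} \<and> w' {Some a, None} > 0)"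
proof -
  obtain p q where pq: "p \<in> V'" "q \<in> V'" "p \<noteq> q" "e = {p, q}" "w' e > 0"
    using assms unfolding edges_def by blast
  show ?thesis
  proof (cases p)
    case None
    then obtain b where "q = Some b" "b \<in> X" using pq by (auto simp: sep_V_def)
    then show ?thesis using None pq by (auto simp: insert_commute)
  next
    case (Some a)
    then have a: "a \<in> X" using pq by (auto simp: sep_V_def)
    show ?thesis
    proof (cases q)
      case None
      then show ?thesis using Some a pq by auto
    next
      case (Some b)
      then have "b \<in> X" "a \<noteq> b" using pq \<open>p = Some a\<close> by (auto simp: sep_V_def)
      then show ?thesis using Some \<open>p = Some a\<close> a pq by (auto simp: sep_w_SS)
    qed
  qed
qed

lemma edges'_SS: "a \<in> X \<Longrightarrow> b \<in> X \<Longrightarrow> a \<noteq> b \<Longrightarrow> {Some a, Some b} \<in> edges V' w' \<longleftrightarrow> w {a, b} > 0"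
  unfolding edges_def sep_V_def by (auto simp: sep_w_SS)

lemma edges'_SN: "a \<in> X \<Longrightarrow> {Some a, None} \<in> edges V' w' \<longleftrightarrow> w' {Some a, None} > 0"
  unfolding edges_def sep_V_def by auto

lemma chi_lift:
  assumes YX: "Y \<subseteq> X"
  shows "chi (cut V w Y) = L (chi (cut V' w' (Some ` Y)))"
proof
  fix e
  show "chi (cut V w Y) e = L (chi (cut V' w' (Some ` Y))) e"
  proof (cases "e \<in> edges V w")
    case False
    then have "e \<notin> cut V w Y" using cut_sub_edges by blast
    then show ?thesis using False unfolding chi_def lift_def by (simp add: indicator_def)
  next
    case True
    then obtain x y where xy: "x \<in> V" "y \<in> V" "x \<noteq> y" "e = {x, y}" "w {x, y} > 0"
      unfolding edges_iff by blast
    have c1: "e \<in> cut V w Y \<longleftrightarrow> (x \<in> Y \<longleftrightarrow> y \<notin> Y)" using cut_pair[OF xy(1-3)] xy by simp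
    show ?thesis
    proof (cases "e \<subseteq> X")
      case True
      then have xX: "x \<in> X" "y \<in> X" using xy by auto
      have "Some ` e = {Some x, Some y}" using xy by simp
      moreover have "{Some x, Some y} \<in> cut V' w' (Some ` Y) \<longleftrightarrow> (x \<in> Y \<longleftrightarrow> y \<notin> Y)"
      proof -
        have "Some x \<in> V'" "Some y \<in> V'" "Some x \<noteq> Some y" using xX xy by (auto simp: sep_V_def)
        from cut_pair[OF this, of w' "Some ` Y"] show ?thesis using xy by (auto simp: sep_w_SS)
      qed
      ultimately show ?thesis using True \<open>e \<in> edges V w\<close> c1 unfolding chi_def lift_def by (simp add: indicator_def)
    next
      case nsub: False
      show ?thesis
      proof (cases "card (e \<inter> X) = 1")
        case True
        then have "x \<in> X \<longleftrightarrow> y \<notin> X" using card_pair_int[OF xy(3)] xy by simp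
        then obtain a b where ab: "a \<in> X" "b \<in> V - X" "e = {a, b}" "w {a, b} > 0"
          using xy by (cases "x \<in> X") (auto simp: insert_commute)
        have eX: "e \<inter> X = {a}" using ab by auto
        have c1': "e \<in> cut V w Y \<longleftrightarrow> a \<in> Y" using c1 xy ab YX by auto
        have pos: "w' {Some a, None} > 0" using w'SN_ge[OF ab(1,2)] ab(4) by simp
        have "Some a \<in> V'" "None \<in> V'" "Some a \<noteq> None" using ab by (auto simp: sep_V_def)
        from cut_pair[OF this, of w' "Some ` Y"]
        have "{Some a, None} \<in> cut V' w' (Some ` Y) \<longleftrightarrow> a \<in> Y" using pos by auto
        moreover have "insert None (Some ` (e \<inter> X)) = {Some a, None}" using eX by auto
        ultimately show ?thesis using True nsub \<open>e \<in> edges V w\<close> c1' unfolding chi_def lift_def by (simp add: indicator_def)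
      next
        case False
        then have "x \<notin> X" "y \<notin> X" using nsub card_pair_int[OF xy(3), of X] xy by auto
        then have "e \<notin> cut V w Y" using c1 YX by auto
        then show ?thesis using False nsub \<open>e \<in> edges V w\<close> unfolding chi_def lift_def by (simp add: indicator_def)
      qed
    qed
  qed
qed

definition "F' = {f :: 'v option set \<Rightarrow> real. \<forall>e. e \<notin> edges V' w' \<longrightarrow> f e = 0}"

lemma inj_L: "inj_on L F'"
proof
  fix f g assume f: "f \<in> F'" and g: "g \<in> F'" and fg: "L f = L g"
  show "f = g"
  proof
    fix e
    show "f e = g e"
    proof (cases "e \<in> edges V' w'")
      case False then show ?thesis using f g by (simp add: F'_def)
    next
      case True
      from edges'_cases[OF True] show ?thesis
      proof (elim disjE exE conjE)
        fix a b assume SS: "a \<in> X" "b \<in> X" "a \<noteq> b" "e = {Some a, Some b}" "0 < w {a, b}"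
        have ed: "{a, b} \<in> edges V w" using SS XV by (intro edge_in) auto
        have "Some ` {a, b} = e" using SS by simp
        then have "L f {a, b} = f e" "L g {a, b} = g e" using SS ed unfolding lift_def by auto
        then show ?thesis using fg by metis
      next
        fix a assume SN: "a \<in> X" "e = {Some a, None}" "0 < w' {Some a, None}"
        have "\<exists>b\<in>V - X. w {a, b} > 0"
        proof (rule ccontr)
          assume "\<not> ?thesis"
          then have "(\<Sum>b\<in>V - X. w {a, b}) \<le> 0" by (intro sum_nonpos) (simp add: not_less)
          then show False using SN w'SN by simp
        qed
        then obtain b where b: "b \<in> V - X" "w {a, b} > 0" by blast
        have ed: "{a, b} \<in> edges V w" using SN b XV by (intro edge_in) auto
        have ns: "\<not> {a, b} \<subseteq> X" using b by auto
        have eX: "{a, b} \<inter> X = {a}" using b SN by auto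
        have "insert None (Some ` ({a, b} \<inter> X)) = e" using eX SN by auto
        then have "L f {a, b} = f e" "L g {a, b} = g e" using ed ns eX unfolding lift_def by auto
        then show ?thesis using fg by metis
      qed
    qed
  qed
qed

lemma span_F':
  "module.span (\<lambda>(c::real) (f::'v option set \<Rightarrow> real) e. c * f e) (chi ` mincuts V' w') \<subseteq> F'"
proof (rule module.span_minimal[OF mod_fun])
  show "chi ` mincuts V' w' \<subseteq> F'"
  proof
    fix h assume "h \<in> chi ` mincuts V' w'"
    then obtain S where S: "S \<in> mincuts V' w'" "h = chi S" by blast
    obtain A where "S = cut V' w' A" using S(1) unfolding mincuts_def by blast
    then have "S \<subseteq> edges V' w'" using cut_sub_edges by simp
    then show "h \<in> F'" using S(2) by (auto simp: F'_def chi_def indicator_def)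
  qed
  show "module.subspace (\<lambda>(c::real) (f::'v option set \<Rightarrow> real) e. c * f e) F'"
    by (rule module.subspaceI[OF mod_fun]) (auto simp: F'_def)
qed

lemma linear_L: "Vector_Spaces.linear (\<lambda>(c::real) (f::'v option set \<Rightarrow> real) e. c * f e) (\<lambda>(c::real) (f::'v set \<Rightarrow> real) e. c * f e) L"
  unfolding module_hom_iff_linear[symmetric] module_hom_def module_hom_axioms_def module_iff_vector_space
  using vs_fun[where 'a="'v option set"] vs_fun[where 'a="'v set"] by (auto simp: lift_def fun_eq_iff)

definition "PX = {h :: 'v set \<Rightarrow> real. (\<forall>e. e \<notin> edges V w \<longrightarrow> h e = 0) \<and>
   (\<forall>e\<in>edges V w. e \<inter> X = {} \<longrightarrow> h e = 0) \<and>
   (\<forall>e1\<in>cut V w X. \<forall>e2\<in>cut V w X. \<forall>x\<in>X. x \<in> e1 \<longrightarrow> x \<in> e2 \<longrightarrow> h e1 = h e2)}"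

lemma cut_X_single:
  assumes "e \<in> cut V w X" "x \<in> e" "x \<in> X"
  shows "e \<in> edges V w" "\<not> e \<subseteq> X" "card (e \<inter> X) = 1" "e \<inter> X = {x}"
proof -
  obtain p q where pq: "p \<in> V" "q \<in> V" "p \<noteq> q" "e = {p, q}" "w {p, q} > 0" "p \<in> X \<longleftrightarrow> q \<notin> X"
    using assms(1) unfolding cut_iff by blast
  show "e \<in> edges V w" using assms(1) cut_sub_edges by blast
  show "\<not> e \<subseteq> X" using pq by auto
  show "card (e \<inter> X) = 1" using assms(1) unfolding cut_def by blast
  show "e \<inter> X = {x}" using pq assms(2,3) by auto
qed

lemma L_in_PX: "L f \<in> PX"
  unfolding PX_def
proof (intro CollectI conjI allI ballI impI)
  fix e assume "e \<notin> edges V w" then show "L f e = 0" by (simp add: lift_def)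
next
  fix e assume e: "e \<in> edges V w" "e \<inter> X = {}"
  then obtain p q where "e = {p, q}" unfolding edges_iff by blast
  then have "\<not> e \<subseteq> X" "card (e \<inter> X) = 0" using e by auto
  then show "L f e = 0" by (simp add: lift_def)
next
  fix e1 e2 x assume h: "e1 \<in> cut V w X" "e2 \<in> cut V w X" "x \<in> X" "x \<in> e1" "x \<in> e2"
  have "L f e1 = f (insert None (Some ` {x}))" using cut_X_single[OF h(1) h(4) h(3)] by (simp add: lift_def)
  moreover have "L f e2 = f (insert None (Some ` {x}))" using cut_X_single[OF h(2) h(5) h(3)] by (simp add: lift_def)
  ultimately show "L f e1 = L f e2" by simp
qed

lemma span_PX: "module.span (\<lambda>(c::real) (f::'v set \<Rightarrow> real) e. c * f e) (L ` S) \<subseteq> PX"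
proof (rule module.span_minimal[OF mod_fun])
  show "L ` S \<subseteq> PX" using L_in_PX by blast
  show "module.subspace (\<lambda>(c::real) (f::'v set \<Rightarrow> real) e. c * f e) PX"
  proof (rule module.subspaceI[OF mod_fun])
    show "0 \<in> PX" by (simp add: PX_def)
  next
    fix x y assume x: "x \<in> PX" and y: "y \<in> PX"
    show "x + y \<in> PX" unfolding PX_def
    proof (intro CollectI conjI allI ballI impI)
      fix e assume "e \<notin> edges V w" then show "(x + y) e = 0" using x y by (simp add: PX_def)
    next
      fix e assume "e \<in> edges V w" "e \<inter> X = {}" then show "(x + y) e = 0" using x y by (simp add: PX_def)
    next
      fix e1 e2 v assume h: "e1 \<in> cut V w X" "e2 \<in> cut V w X" "v \<in> X" "v \<in> e1" "v \<in> e2"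
      have "x e1 = x e2" using x h unfolding PX_def by blast
      moreover have "y e1 = y e2" using y h unfolding PX_def by blast
      ultimately show "(x + y) e1 = (x + y) e2" by simp
    qed
  next
    fix c :: real and x assume x: "x \<in> PX"
    show "(\<lambda>e. c * x e) \<in> PX" unfolding PX_def
    proof (intro CollectI conjI allI ballI impI)
      fix e assume "e \<notin> edges V w" then show "c * x e = 0" using x by (simp add: PX_def)
    next
      fix e assume "e \<in> edges V w" "e \<inter> X = {}" then show "c * x e = 0" using x by (simp add: PX_def)
    next
      fix e1 e2 v assume h: "e1 \<in> cut V w X" "e2 \<in> cut V w X" "v \<in> X" "v \<in> e1" "v \<in> e2"
      have "x e1 = x e2" using x h unfolding PX_def by blast
      then show "c * x e1 = c * x e2" by simp
    qed
  qed
qed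

end


lemma cross_edge:
  assumes "(x, y) \<in> (edge_rel E)\<^sup>*" "x \<in> A" "y \<notin> A"
  shows "\<exists>a b. {a, b} \<in> E \<and> a \<in> A \<and> b \<notin> A"
  using assms
proof (induction rule: rtrancl_induct)
  case base then show ?case by simp
next
  case (step y z)
  show ?case
  proof (cases "y \<in> A")
    case True
    then show ?thesis using step(2,5) unfolding edge_rel_def by blast
  next
    case False
    then show ?thesis using step by blast
  qed
qed

lemma const_on_connected:
  assumes conn: "connected_edges Z" and ne: "\<forall>e\<in>Z. e \<noteq> {}"
    and share: "\<And>e1 e2 v. e1 \<in> Z \<Longrightarrow> e2 \<in> Z \<Longrightarrow> v \<in> e1 \<Longrightarrow> v \<in> e2 \<Longrightarrow> h e1 = h e2"
    and e0: "e0 \<in> Z" and e: "e \<in> Z"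
  shows "h e = h e0"
proof -
  obtain u0 where u0: "u0 \<in> e0" using ne e0 by blast
  obtain u where u: "u \<in> e" using ne e by blast
  have "(u0, u) \<in> (edge_rel Z)\<^sup>*" using conn u0 u e0 e unfolding connected_edges_def by blast
  then have "\<forall>e'\<in>Z. u \<in> e' \<longrightarrow> h e' = h e0"
  proof (induction rule: rtrancl_induct)
    case base then show ?case using share e0 u0 by blast
  next
    case (step a b)
    have ab: "{a, b} \<in> Z" using step(2) unfolding edge_rel_def by simp
    then have "h {a, b} = h e0" using step(3) by simp
    then show ?case using share ab by (metis insertI1 insert_commute)
  qed
  then show ?thesis using e u by blast
qed



theorem lemma14:
  fixes V :: "'v set" and w :: "'v set \<Rightarrow> real" and X0 :: "'v set"
  assumes "weighted_graph V w"
    and "connected_graph V w"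
    and "is_shore V X0"
    and "cut V w X0 \<in> mincuts V w"
    and "crossless V w X0"
    and "\<not> star_cut V w (cut V w X0)"
  shows "int (cdim V w) \<le> int (cdim (sep_V X0) (sep_w w X0 (V - X0)))
                          + int (cdim (sep_V (V - X0)) (sep_w w (V - X0) X0)) - 1 \<and>
         (connected_edges (cut V w X0) \<longrightarrow>
         int (cdim V w) = int (cdim (sep_V X0) (sep_w w X0 (V - X0)))
                          + int (cdim (sep_V (V - X0)) (sep_w w (V - X0) X0)) - 1)"
proof -
  let ?s = "\<lambda>(c::real) (f::'v set \<Rightarrow> real) e. c * f e"
  let ?s' = "\<lambda>(c::real) (f::'v option set \<Rightarrow> real) e. c * f e"
  have X0V: "X0 \<subseteq> V" "X0 \<noteq> {}" "X0 \<noteq> V" using assms(3) unfolding is_shore_def by auto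
  have X1X0: "V - (V - X0) = X0" using X0V by auto
  interpret S0: sepl V w X0 using assms(1,3,4) by unfold_locales
  have sh1: "is_shore V (V - X0)" using X0V unfolding is_shore_def by auto
  have cc: "cut V w (V - X0) = cut V w X0" by (rule cut_compl)
  interpret S1: sepl V w "V - X0" using assms(1) sh1 cc assms(4) by unfold_locales auto
  have lam: "S1.lam = S0.lam" by (simp add: S1.lam_def S0.lam_def cc)
  define Q0 where "Q0 = {Y. Y \<noteq> {} \<and> Y \<subseteq> X0 \<and> cut_weight w (cut V w Y) = S0.lam}"
  define Q1 where "Q1 = {Y. Y \<noteq> {} \<and> Y \<subseteq> V - X0 \<and> cut_weight w (cut V w Y) = S0.lam}"
  define M0 where "M0 = mincuts (sep_V X0) (sep_w w X0 (V - X0))"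
  define M1 where "M1 = mincuts (sep_V (V - X0)) (sep_w w (V - X0) (V - (V - X0)))"
  have M0: "M0 = (\<lambda>Y. cut (sep_V X0) (sep_w w X0 (V - X0)) (Some ` Y)) ` Q0"
    unfolding M0_def Q0_def S0.mincuts' by blast
  have M1: "M1 = (\<lambda>Y. cut (sep_V (V - X0)) (sep_w w (V - X0) (V - (V - X0))) (Some ` Y)) ` Q1"
    unfolding M1_def Q1_def S1.mincuts' lam by blast
  define A where "A = lift V w X0 ` (chi ` M0)"
  define B where "B = lift V w (V - X0) ` (chi ` M1)"
  have A: "A = (\<lambda>Y. chi (cut V w Y)) ` Q0"
    unfolding A_def M0 image_image
    by (rule image_cong[OF refl]) (simp add: Q0_def S0.chi_lift)
  have B: "B = (\<lambda>Y. chi (cut V w Y)) ` Q1"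
    unfolding B_def M1 image_image
    by (rule image_cong[OF refl]) (simp add: Q1_def S1.chi_lift)
  have mc: "mincuts V w = (\<lambda>Y. cut V w Y) ` (Q0 \<union> Q1)"
  proof
    show "mincuts V w \<subseteq> (\<lambda>Y. cut V w Y) ` (Q0 \<union> Q1)"
    proof
      fix S assume "S \<in> mincuts V w"
      then have "S \<in> {cut V w Y | Y. is_shore V Y \<and> cut_weight w (cut V w Y) = S0.lam}"
        using S0.mincuts_lam by simp
      then obtain Y where Y: "S = cut V w Y" "is_shore V Y" "cut_weight w (cut V w Y) = S0.lam" by blast
      have YV: "Y \<subseteq> V" "Y \<noteq> {}" "Y \<noteq> V" using Y(2) unfolding is_shore_def by auto
      have "S \<in> mincuts V w" by fact
      then have nc: "\<not> crosses V X0 Y" using assms(5) Y(1,2) unfolding crossless_def by blast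
      have wc: "cut_weight w (cut V w (V - Y)) = S0.lam" using Y(3) by (simp add: cut_compl)
      have S': "S = cut V w (V - Y)" using Y(1) by (simp add: cut_compl)
      have nY: "V - Y \<noteq> {}" using YV by auto
      consider "X0 \<inter> Y = {}" | "X0 - Y = {}" | "Y - X0 = {}" | "V - (X0 \<union> Y) = {}"
        using nc unfolding crosses_def by blast
      then show "S \<in> (\<lambda>Y. cut V w Y) ` (Q0 \<union> Q1)"
      proof cases
        case 1
        then have "Y \<in> Q1" using YV Y(3) unfolding Q1_def by auto
        then show ?thesis using Y(1) by blast
      next
        case 2
        then have "V - Y \<in> Q1" using nY wc unfolding Q1_def by auto
        then show ?thesis using S' by blast
      next
        case 3
        then have "Y \<in> Q0" using YV Y(3) unfolding Q0_def by auto
        then show ?thesis using Y(1) by blast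
      next
        case 4
        then have "V - Y \<in> Q0" using nY wc unfolding Q0_def by auto
        then show ?thesis using S' by blast
      qed
    qed
  next
    show "(\<lambda>Y. cut V w Y) ` (Q0 \<union> Q1) \<subseteq> mincuts V w"
    proof
      fix S assume "S \<in> (\<lambda>Y. cut V w Y) ` (Q0 \<union> Q1)"
      then obtain Y where Y: "S = cut V w Y" "Y \<in> Q0 \<union> Q1" by blast
      have "is_shore V Y"
        using Y(2) S0.Y_shore S1.Y_shore unfolding Q0_def Q1_def by blast
      moreover have "cut_weight w (cut V w Y) = S0.lam" using Y(2) unfolding Q0_def Q1_def by blast
      ultimately have "S \<in> {cut V w Y | Y. is_shore V Y \<and> cut_weight w (cut V w Y) = S0.lam}"
        using Y(1) by blast
      then show "S \<in> mincuts V w" using S0.mincuts_lam by simp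
    qed
  qed
  have chiAB: "chi ` mincuts V w = A \<union> B"
    unfolding mc A B image_Un image_image by simp
  have fA: "finite A" unfolding A Q0_def
    using S0.fX by (intro finite_imageI) (rule finite_subset[of _ "Pow X0"]; auto)
  have fB: "finite B" unfolding B Q1_def
    using S0.fV by (intro finite_imageI) (rule finite_subset[of _ "Pow (V - X0)"]; auto)
  have dA: "cdim (sep_V X0) (sep_w w X0 (V - X0)) = vector_space.dim ?s A"
  proof -
    have inj: "inj_on (lift V w X0) (module.span ?s' (chi ` M0))"
      unfolding M0_def by (rule inj_on_subset[OF S0.inj_L S0.span_F'])
    show ?thesis unfolding cdim_def A_def
      using linear.dim_image_inj_my[OF S0.linear_L inj] unfolding M0_def by simp
  qed
  have dB: "cdim (sep_V (V - X0)) (sep_w w (V - X0) X0) = vector_space.dim ?s B"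
  proof -
    have inj: "inj_on (lift V w (V - X0)) (module.span ?s' (chi ` M1))"
      unfolding M1_def by (rule inj_on_subset[OF S1.inj_L S1.span_F'])
    have "vector_space.dim ?s B = vector_space.dim ?s' (chi ` M1)"
      unfolding B_def using linear.dim_image_inj_my[OF S1.linear_L inj] by simp
    then show ?thesis unfolding cdim_def M1_def X1X0 by simp
  qed
  have dG: "cdim V w = vector_space.dim ?s (A \<union> B)"
    unfolding cdim_def chiAB by simp
  define Z where "Z = cut V w X0"
  define z where "z = chi Z"
  have X0Q0: "X0 \<in> Q0" unfolding Q0_def S0.lam_def using X0V by auto
  have X1Q1: "V - X0 \<in> Q1" unfolding Q1_def S0.lam_def using sh1 cc unfolding is_shore_def by auto
  have zA: "z \<in> A" unfolding A z_def Z_def using X0Q0 by blast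
  have zB: "z \<in> B" unfolding B z_def Z_def
    by (rule image_eqI[of _ _ "V - X0"]) (simp_all add: cc X1Q1)
  have spA: "z \<in> module.span ?s A" using zA module.span_base[OF mod_fun] by blast
  have spB: "z \<in> module.span ?s B" using zB module.span_base[OF mod_fun] by blast
  obtain x y where xy: "x \<in> X0" "y \<in> V - X0" using X0V by blast
  have "(x, y) \<in> (edge_rel (edges V w))\<^sup>*" using assms(2) xy X0V unfolding connected_graph_def by blast
  from cross_edge[OF this xy(1)] xy obtain a b where ab: "{a, b} \<in> edges V w" "a \<in> X0" "b \<notin> X0" by blast
  have abZ: "{a, b} \<in> Z"
  proof -
    obtain p q where "p \<in> V" "q \<in> V" "p \<noteq> q" "{a, b} = {p, q}" "w {p, q} > 0"
      using ab(1) unfolding edges_iff by blast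
    then have abV: "a \<in> V" "b \<in> V" "a \<noteq> b" "w {a, b} > 0" using ab(2,3) by (auto simp: doubleton_eq_iff insert_commute)
    show ?thesis unfolding Z_def using cut_pair[OF abV(1-3), of w X0] abV(4) ab(2,3) by simp
  qed
  have z0: "z \<noteq> 0"
  proof
    assume "z = 0"
    then have "z {a, b} = 0" by simp
    then show False using abZ unfolding z_def chi_def by simp
  qed
  note U = vector_space.dim_union_one[OF vs_fun fA fB spA spB z0]
  have part1: "int (cdim V w) \<le> int (cdim (sep_V X0) (sep_w w X0 (V - X0)))
                          + int (cdim (sep_V (V - X0)) (sep_w w (V - X0) X0)) - 1"
    using U(1) unfolding dG dA dB by linarith
  have part2: "int (cdim V w) = int (cdim (sep_V X0) (sep_w w X0 (V - X0)))
                          + int (cdim (sep_V (V - X0)) (sep_w w (V - X0) X0)) - 1"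
    if conn: "connected_edges (cut V w X0)"
  proof -
    have "module.span ?s A \<inter> module.span ?s B \<subseteq> module.span ?s {z}"
    proof
      fix h assume h: "h \<in> module.span ?s A \<inter> module.span ?s B"
      have h0: "h \<in> S0.PX" using h S0.span_PX unfolding A_def by blast
      have h1: "h \<in> S1.PX" using h S1.span_PX unfolding B_def by blast
      have Zsub: "\<And>e. e \<in> Z \<Longrightarrow> \<exists>p q. p \<in> V \<and> q \<in> V \<and> p \<noteq> q \<and> e = {p, q} \<and> w {p, q} > 0 \<and> (p \<in> X0 \<longleftrightarrow> q \<notin> X0)"
        unfolding Z_def cut_iff by blast
      have share: "h e1 = h e2" if e12: "e1 \<in> Z" "e2 \<in> Z" "v \<in> e1" "v \<in> e2" for e1 e2 v
      proof -
        have vV: "v \<in> V" using Zsub[OF e12(1)] e12(3) by auto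
        show ?thesis
        proof (cases "v \<in> X0")
          case True
          then show ?thesis using h0 e12 unfolding S0.PX_def Z_def by blast
        next
          case False
          then have "v \<in> V - X0" using vV by blast
          then show ?thesis using h1 e12 cc unfolding S1.PX_def Z_def by blast
        qed
      qed
      have ne: "\<forall>e\<in>Z. e \<noteq> {}" using Zsub by blast
      have "h = ?s (h {a, b}) z"
      proof
        fix e
        show "h e = ?s (h {a, b}) z e"
        proof (cases "e \<in> Z")
          case True
          have "h e = h {a, b}"
            using const_on_connected[of Z h "{a, b}" e] conn ne share abZ True unfolding Z_def by blast
          then show ?thesis using True unfolding z_def chi_def by simp
        next
          case False
          have "h e = 0"
          proof (cases "e \<in> edges V w")
            case False then show ?thesis using h0 unfolding S0.PX_def by blast
          next
            case True
            then obtain p q where pq: "p \<in> V" "q \<in> V" "p \<noteq> q" "e = {p, q}" "w {p, q} > 0"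
              unfolding edges_iff by blast
            have "\<not> (p \<in> X0 \<longleftrightarrow> q \<notin> X0)" using False cut_pair[OF pq(1-3)] pq unfolding Z_def by auto
            then consider "p \<in> X0" "q \<in> X0" | "p \<notin> X0" "q \<notin> X0" by blast
            then show ?thesis
            proof cases
              case 1
              then have "e \<inter> (V - X0) = {}" using pq by auto
              then show ?thesis using h1 True unfolding S1.PX_def by blast
            next
              case 2
              then have "e \<inter> X0 = {}" using pq by auto
              then show ?thesis using h0 True unfolding S0.PX_def by blast
            qed
          qed
          then show ?thesis using False unfolding z_def chi_def by simp
        qed
      qed
      then show "h \<in> module.span ?s {z}"
        using module.span_scale[OF mod_fun] module.span_base[OF mod_fun, of z "{z}"] by (metis singletonI)
    qed
    from U(2)[OF this] show ?thesis unfolding dG dA dB by linarith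
  qed
  show ?thesis using part1 part2 by blast
qed

end
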